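(* In the setting below, an element $x\in V$ is invertible in the Jordan algebra $V$ if and only if $h\in[x,\mathfrak g_{-1}(h)]$.
   Context: $\mathfrak g$ is a hermitian simple real Lie algebra, $\theta$ a Cartan involution, $\mathfrak g=\mathfrak k\oplus\mathfrak p$, $h\in\mathfrak p$ an Euler element (non-zero, $\operatorname{ad}h$ diagonalizable with eigenvalues in $\{-1,0,1\}$), $\mathfrak g_\lambda(h)=\ker(\operatorname{ad}h-\lambda)$. Choose $e\in V:=\mathfrak g_1(h)$ with $[e,\theta(e)]=-2h$; then $x*y:=-\tfrac12[[x,\theta(e)],y]$ makes $V$ a euclidean Jordan algebra with unit $e$; invertibility refers to this Jordan algebra. *)

theory Defs
  imports "HOL-Analysis.Analysis"
begin

text \<open>A finite-dimensional real Lie algebra is modelled as a euclidean space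
(any finite-dimensional real vector space, with an auxiliary inner product) together
with a bracket operation br.\<close>

definition lie_algebra :: "('a::euclidean_space \<Rightarrow> 'a \<Rightarrow> 'a) \<Rightarrow> bool" where
  "lie_algebra br \<longleftrightarrow> bilinear br \<and> (\<forall>x. br x x = 0) \<and>
     (\<forall>x y z. br x (br y z) + br y (br z x) + br z (br x y) = 0)"

text \<open>Killing form: trace of ad x o ad y (trace computed in the orthonormal basis Basis).\<close>
definition killing :: "('a::euclidean_space \<Rightarrow> 'a \<Rightarrow> 'a) \<Rightarrow> 'a \<Rightarrow> 'a \<Rightarrow> real" where
  "killing br x y = (\<Sum>b\<in>Basis. br x (br y b) \<bullet> b)"

definition lie_ideal :: "('a::euclidean_space \<Rightarrow> 'a \<Rightarrow> 'a) \<Rightarrow> 'a set \<Rightarrow> bool" where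
  "lie_ideal br I \<longleftrightarrow> subspace I \<and> (\<forall>x y. y \<in> I \<longrightarrow> br x y \<in> I)"

definition simple_lie :: "('a::euclidean_space \<Rightarrow> 'a \<Rightarrow> 'a) \<Rightarrow> bool" where
  "simple_lie br \<longleftrightarrow> lie_algebra br \<and> (\<exists>x y. br x y \<noteq> 0) \<and>
     (\<forall>I. lie_ideal br I \<longrightarrow> I = {0} \<or> I = UNIV)"

definition cartan_involution :: "('a::euclidean_space \<Rightarrow> 'a \<Rightarrow> 'a) \<Rightarrow> ('a \<Rightarrow> 'a) \<Rightarrow> bool" where
  "cartan_involution br \<theta> \<longleftrightarrow> linear \<theta> \<and> (\<forall>x. \<theta> (\<theta> x) = x) \<and>
     (\<forall>x y. \<theta> (br x y) = br (\<theta> x) (\<theta> y)) \<and>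
     (\<forall>x. x \<noteq> 0 \<longrightarrow> killing br x (\<theta> x) < 0)"

definition kpart :: "('a::euclidean_space \<Rightarrow> 'a) \<Rightarrow> 'a set" where
  "kpart \<theta> = {x. \<theta> x = x}"

definition ppart :: "('a::euclidean_space \<Rightarrow> 'a) \<Rightarrow> 'a set" where
  "ppart \<theta> = {x. \<theta> x = - x}"

text \<open>Hermitian: simple, and the maximal compact subalgebra k has non-trivial centre.\<close>
definition hermitian_simple :: "('a::euclidean_space \<Rightarrow> 'a \<Rightarrow> 'a) \<Rightarrow> ('a \<Rightarrow> 'a) \<Rightarrow> bool" where
  "hermitian_simple br \<theta> \<longleftrightarrow> simple_lie br \<and>
     (\<exists>z\<in>kpart \<theta>. z \<noteq> 0 \<and> (\<forall>k\<in>kpart \<theta>. br z k = 0))"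

definition eigsp :: "('a::euclidean_space \<Rightarrow> 'a \<Rightarrow> 'a) \<Rightarrow> 'a \<Rightarrow> real \<Rightarrow> 'a set" where
  "eigsp br h c = {x. br h x = c *\<^sub>R x}"

definition euler_element :: "('a::euclidean_space \<Rightarrow> 'a \<Rightarrow> 'a) \<Rightarrow> 'a \<Rightarrow> bool" where
  "euler_element br h \<longleftrightarrow> h \<noteq> 0 \<and>
     (\<forall>x. \<exists>a b c. x = a + b + c \<and> a \<in> eigsp br h (-1) \<and> b \<in> eigsp br h 0 \<and> c \<in> eigsp br h 1)"

text \<open>Jordan product on V = g_1(h): x*y = -1/2 [[x, theta e], y].\<close>
definition jprod :: "('a::euclidean_space \<Rightarrow> 'a \<Rightarrow> 'a) \<Rightarrow> ('a \<Rightarrow> 'a) \<Rightarrow> 'a \<Rightarrow> 'a \<Rightarrow> 'a \<Rightarrow> 'a" where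
  "jprod br \<theta> e x y = - (1/2) *\<^sub>R br (br x (\<theta> e)) y"

definition jinvertible :: "('a::euclidean_space \<Rightarrow> 'a \<Rightarrow> 'a) \<Rightarrow> ('a \<Rightarrow> 'a) \<Rightarrow> 'a \<Rightarrow> 'a \<Rightarrow> 'a \<Rightarrow> bool" where
  "jinvertible br \<theta> h e x \<longleftrightarrow> (\<exists>y\<in>eigsp br h 1.
     jprod br \<theta> e x y = e \<and> jprod br \<theta> e (jprod br \<theta> e x x) y = x)"

end

theory Submission
  imports Defs
begin


lemma three: "(q::'b::real_vector) + 2 *\<^sub>R q = 3 *\<^sub>R q"
proof -
  have "q + 2 *\<^sub>R q = (1+2) *\<^sub>R q" by (simp only: scaleR_add_left scaleR_one)
  then show ?thesis by simp
qed

lemma three': "3 *\<^sub>R (q::'b::real_vector) = q + q + q"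
proof -
  have "3 *\<^sub>R q = (1+1+1) *\<^sub>R q" by simp
  then show ?thesis by (simp only: scaleR_add_left scaleR_one)
qed

locale lieb =
  fixes br :: "'a::real_vector \<Rightarrow> 'a \<Rightarrow> 'a"
  assumes bil: "bilinear br"
  and alt: "\<And>x. br x x = 0"
  and jac: "\<And>x y z. br x (br y z) + br y (br z x) + br z (br x y) = 0"
begin

lemmas lin[simp] = bilinear_ladd[OF bil] bilinear_radd[OF bil] bilinear_lmul[OF bil]
  bilinear_rmul[OF bil] bilinear_lneg[OF bil] bilinear_rneg[OF bil] bilinear_lzero[OF bil]
  bilinear_rzero[OF bil] bilinear_lsub[OF bil] bilinear_rsub[OF bil]

lemma antisym: "br a b = - br b a"
proof -
  have "br (a+b) (a+b) = br a a + br a b + br b a + br b b" by simp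
  then have "br a b + br b a = 0" by (simp add: alt)
  then show ?thesis by (simp add: eq_neg_iff_add_eq_0)
qed

lemma deriv: "br a (br b c) = br (br a b) c + br b (br a c)"
proof -
  have 1: "br b (br c a) = - br b (br a c)" using antisym[of c a] by simp
  have 2: "br c (br a b) = - br (br a b) c" using antisym[of c "br a b"] by simp
  from jac[of a b c] 1 2 show ?thesis
    by (simp add: algebra_simps eq_neg_iff_add_eq_0)
qed

end

locale tkk = lieb br for br :: "'a::real_vector \<Rightarrow> 'a \<Rightarrow> 'a" +
  fixes h e f :: 'a
  assumes cube: "\<And>v. br h (br h (br h v)) = br h v"
  and he: "br h e = e" and hf: "br h f = - f" and ef: "br e f = 2 *\<^sub>R h"
  and cent: "\<And>w. br h w = 0 \<Longrightarrow> (\<And>a. br h a = a \<Longrightarrow> br w a = 0)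
      \<Longrightarrow> (\<And>b. br h b = - b \<Longrightarrow> br w b = 0) \<Longrightarrow> w = 0"
begin

lemma vanish:
  assumes "br h v = c *\<^sub>R v" "c \<noteq> 1" "c \<noteq> -1" "c \<noteq> 0"
  shows "v = 0"
proof -
  have 1: "br h (br h (br h v)) = (c*c*c) *\<^sub>R v" using assms(1) by simp
  have 2: "br h (br h (br h v)) = c *\<^sub>R v" using cube[of v] assms(1) by simp
  from 1 2 have "(c*c*c - c) *\<^sub>R v = 0" by (simp add: scaleR_left_diff_distrib)
  moreover have "c*c*c - c \<noteq> 0"
  proof
    assume "c*c*c - c = 0"
    then have "c * (c - 1) * (c + 1) = 0" by (simp add: algebra_simps)
    with assms(2-4) show False by auto
  qed
  ultimately show ?thesis by simp
qed

lemma g11: assumes "br h a = a" "br h b = b" shows "br a b = 0"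
proof -
  have "br h (br a b) = 2 *\<^sub>R br a b" using deriv[of h a b] assms by (simp add: scaleR_2)
  then show ?thesis by (rule vanish) auto
qed

lemma gmm: assumes "br h a = - a" "br h b = - b" shows "br a b = 0"
proof -
  have "br h (br a b) = (-2) *\<^sub>R br a b" using deriv[of h a b] assms by (simp add: scaleR_2)
  then show ?thesis by (rule vanish) auto
qed

lemma g1m: assumes "br h a = a" "br h b = - b" shows "br h (br a b) = 0"
  using deriv[of h a b] assms by simp

lemma gm1: assumes "br h a = - a" "br h b = b" shows "br h (br a b) = 0"
  using deriv[of h a b] assms by simp

lemma g01: assumes "br h c = 0" "br h a = a" shows "br h (br c a) = br c a"
  using deriv[of h c a] assms by simp

lemma g0m: assumes "br h c = 0" "br h a = - a" shows "br h (br c a) = - br c a"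
  using deriv[of h c a] assms by simp

lemma g00: assumes "br h c = 0" "br h a = 0" shows "br h (br c a) = 0"
  using deriv[of h c a] assms by simp

lemma hh: "br h h = 0" by (rule alt)

lemma sym11: assumes "br h a = a" "br h c = c" shows "br (br a b) c = br (br c b) a"
proof -
  have "br a c = 0" using g11 assms by blast
  then have "br (br a b) c = br a (br b c)" using deriv[of a b c] by simp
  also have "\<dots> = - br a (br c b)" using antisym[of b c] by simp
  also have "\<dots> = br (br c b) a" using antisym[of a "br c b"] by simp
  finally show ?thesis .
qed

lemma reverse:
  assumes x1: "br h x = x" and zm: "br h z = - z" and xz: "br x z = h"
  defines "y \<equiv> - br e (br e z)"
  shows "br h y = y" and "(1/2) *\<^sub>R br (br x f) y = e"
    and "(1/2) *\<^sub>R br (br ((1/2) *\<^sub>R br (br x f) x) f) y = x"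
proof -
  define B where "B = br e z"
  have hB: "br h B = 0" unfolding B_def using g1m[OF he zm] .
  have heB: "br h (br e B) = br e B" using deriv[of h e B] hB he by simp
  show hy: "br h y = y" unfolding y_def B_def[symmetric] using heB by simp
  have zf: "br z f = 0" using gmm[OF zm hf] .
  have zh: "br z h = z" using antisym[of z h] zm by simp
  have Bf: "br B f = -2 *\<^sub>R z"
    using deriv[of e z f] zf ef zh unfolding B_def[symmetric] by (simp add: algebra_simps eq_neg_iff_add_eq_0)
  have Bh: "br B h = 0" using antisym[of B h] hB by simp
  have eBf: "br (br e B) f = -2 *\<^sub>R B"
    using deriv[of e B f] Bf ef Bh by (simp add: algebra_simps eq_neg_iff_add_eq_0 B_def[symmetric])
  have yf: "br y f = 2 *\<^sub>R B" unfolding y_def B_def[symmetric] using eBf by simp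
  have Bx: "br B x = e" unfolding B_def using sym11[OF he x1, of z] xz he by simp
  have 1: "br (br x f) y = 2 *\<^sub>R e" using sym11[OF x1 hy, of f] yf Bx by simp
  then show "(1/2) *\<^sub>R br (br x f) y = e" by simp
  have Le: "br (br x f) e = 2 *\<^sub>R x" using sym11[OF x1 he, of f] ef x1 by simp
  have BL: "br B (br x f) = 0"
    using deriv[of B x f] Bx Bf ef xz by simp
  define s where "s = br (br x f) x"
  have hL: "br h (br x f) = 0" using g1m[OF x1 hf] .
  have hs: "br h s = s" unfolding s_def using g01[OF hL x1] .
  have Bs: "br B s = 2 *\<^sub>R x" unfolding s_def using deriv[of B "br x f" x] BL Bx Le by simp
  have "br (br s f) y = 4 *\<^sub>R x" using sym11[OF hs hy, of f] yf Bs by simp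
  then show "(1/2) *\<^sub>R br (br ((1/2) *\<^sub>R br (br x f) x) f) y = x"
    unfolding s_def[symmetric] by simp
qed

lemma fe: "br f e = - (2 *\<^sub>R h)" using antisym[of f e] ef by simp

lemma E2F2: assumes "br h a = a" shows "br e (br e (br f (br f a))) = 4 *\<^sub>R a"
proof -
  have ea: "br e a = 0" using g11[OF he assms] .
  have hfa: "br h (br f a) = 0" using gm1[OF hf assms] .
  have ff: "br f (br f a) = 0 \<or> True" by simp
  have 1: "br e (br f a) = 2 *\<^sub>R a" using deriv[of e f a] ef ea assms by simp
  have 2: "br e (br f (br f a)) = 2 *\<^sub>R br f a"
    using deriv[of e f "br f a"] ef hfa 1 by simp
  show ?thesis using 2 1 by simp
qed

lemma F2E2: assumes "br h b = - b" shows "br f (br f (br e (br e b))) = 4 *\<^sub>R b"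
proof -
  have fb: "br f b = 0" using gmm[OF hf assms] .
  have heb: "br h (br e b) = 0" using g1m[OF he assms] .
  have 1: "br f (br e b) = 2 *\<^sub>R b" using deriv[of f e b] fe fb assms by simp
  have 2: "br f (br e (br e b)) = 2 *\<^sub>R br e b"
    using deriv[of f e "br e b"] fe heb 1 by simp
  show ?thesis using 2 1 by simp
qed

lemma forward:
  assumes x1: "br h x = x" and y1: "br h y = y"
    and inv1: "(1/2) *\<^sub>R br (br x f) y = e"
    and inv2: "(1/2) *\<^sub>R br (br ((1/2) *\<^sub>R br (br x f) x) f) y = x"
  shows "\<exists>z. br h z = - z \<and> br x z = h"
proof -
  define L where "L = br x f"
  have hL: "br h L = 0" unfolding L_def using g1m[OF x1 hf] .
  define s where "s = br L x"
  have hs: "br h s = s" unfolding s_def using g01[OF hL x1] .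
  have I1: "br L y = 2 *\<^sub>R e"
  proof -
    have "br L y = 2 *\<^sub>R ((1/2) *\<^sub>R br L y)" by simp
    then show ?thesis using inv1 unfolding L_def by simp
  qed
  have I2: "br (br s f) y = 4 *\<^sub>R x"
  proof -
    have "(1/4) *\<^sub>R br (br s f) y = x" using inv2 unfolding L_def[symmetric] s_def[symmetric] by simp
    moreover have "br (br s f) y = 4 *\<^sub>R ((1/4) *\<^sub>R br (br s f) y)" by simp
    ultimately show ?thesis by simp
  qed
  define M where "M = br f y"
  have hM: "br h M = 0" unfolding M_def using gm1[OF hf y1] .
  have xy: "br x y = 0" using g11[OF x1 y1] .
  have xM: "br x M = 2 *\<^sub>R e" unfolding M_def using deriv[of x f y] I1 xy unfolding L_def by simp
  define z where "z = - (1/4) *\<^sub>R br f M"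
  have hfM: "br h (br f M) = - br f M" using deriv[of h f M] hf hM by simp
  have hz: "br h z = - z" unfolding z_def using hfM by simp
  define K where "K = br L M"
  have xfM: "br x (br f M) = K - 4 *\<^sub>R h"
    using deriv[of x f M] xM fe unfolding K_def L_def by simp
  define w where "w = br x z - h"
  have "br x z = - (1/4) *\<^sub>R (K - 4 *\<^sub>R h)" unfolding z_def using xfM by simp
  then have wK: "w = - (1/4) *\<^sub>R K" unfolding w_def by (simp add: algebra_simps)
  have xzw: "br x z = h + w" unfolding w_def by simp
  have hw: "br h w = 0" unfolding w_def using g1m[OF x1 hz] hh by simp
  have Mx: "br M x = - (2 *\<^sub>R e)" using antisym[of M x] xM by simp
  have Le: "br L e = 2 *\<^sub>R x" unfolding L_def using sym11[OF x1 he, of f] ef x1 by simp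
  have sy: "br s y = 0" using g11[OF hs y1] .
  have Ms: "br M s = - (4 *\<^sub>R x)"
    using antisym[of M s] deriv[of s f y] I2 sy unfolding M_def by simp
  have Kx: "br K x = 0"
    using deriv[of L M x] Mx Ms Le unfolding K_def s_def[symmetric] by simp
  have ey: "br e y = 0" using g11[OF he y1] .
  have Me: "br M e = - (2 *\<^sub>R y)"
    using antisym[of M e] deriv[of e f y] ef ey y1 unfolding M_def by simp
  have Ke: "br K e = 0"
    using deriv[of L M e] Me Le I1 Mx unfolding K_def by simp
  have wx: "br w x = 0" unfolding wK using Kx by simp
  have we: "br w e = 0" unfolding wK using Ke by simp
  have wf: "br w f = 0"
  proof -
    define v where "v = br w f"
    have hv: "br h v = - v" unfolding v_def using g0m[OF hw hf] .
    have ew: "br e w = 0" using antisym[of e w] we by simp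
    have wh: "br w h = 0" using antisym[of w h] hw by simp
    have ev: "br e v = 0" unfolding v_def using deriv[of e w f] ew ef wh by simp
    have fv: "br f v = 0" using gmm[OF hf hv] .
    have "br f (br e v) = 2 *\<^sub>R v" using deriv[of f e v] fe fv hv by simp
    with ev show ?thesis unfolding v_def by simp
  qed
  have wcx: "\<And>c. br w (br x c) = br x (br w c)" using deriv[of w x] wx by simp
  have wcf: "\<And>c. br w (br f c) = br f (br w c)" using deriv[of w f] wf by simp
  have zx: "br z x = - (h + w)" using antisym[of z x] xzw by simp
  have Nm: "\<And>v. br h v = - v \<Longrightarrow> br h (br w v) = - br w v" using g0m[OF hw] by blast
  have N1: "\<And>a. br h a = a \<Longrightarrow> br h (br w a) = br w a" using g01[OF hw] by blast
  have A1: "\<And>v. br h v = - v \<Longrightarrow> br z (br x v) = v - br w v"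
  proof -
    fix v assume hv: "br h v = - v"
    have "br z v = 0" using gmm[OF hz hv] .
    then show "br z (br x v) = v - br w v" using deriv[of z x v] zx hv by simp
  qed
  have B1: "\<And>a. br h a = a \<Longrightarrow> br x (br z a) = a + br w a"
  proof -
    fix a assume ha: "br h a = a"
    have "br x a = 0" using g11[OF x1 ha] .
    then show "br x (br z a) = a + br w a" using deriv[of x z a] xzw ha by simp
  qed
  have Za: "\<And>v. br h v = - v \<Longrightarrow> br x (br x (br w v)) = 0"
  proof -
    fix v assume hv: "br h v = - v"
    define c1 where "c1 = br x v"
    define c2 where "c2 = br x c1"
    have hc1: "br h c1 = 0" unfolding c1_def using g1m[OF x1 hv] .
    have hc2: "br h c2 = c2" unfolding c2_def using deriv[of h x c1] x1 hc1 by simp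
    have xc2: "br x c2 = 0" using g11[OF x1 hc2] .
    have wc1: "br w c1 = br x (br w v)" unfolding c1_def using wcx .
    have wc2: "br w c2 = br x (br x (br w v))" unfolding c2_def using wcx wc1 by simp
    have zc2: "br z c2 = c1 - 2 *\<^sub>R br x (br w v)"
      unfolding c2_def using deriv[of z x c1] zx hc1 wc1 A1[OF hv] unfolding c1_def[symmetric]
      by (simp add: scaleR_2 c1_def)
    have "0 = br z (br x c2)" using xc2 by simp
    also have "\<dots> = - br h c2 - br w c2 + br x (br z c2)"
      using deriv[of z x c2] zx by (simp add: algebra_simps)
    also have "\<dots> = - c2 - br x (br x (br w v)) + br x c1 - 2 *\<^sub>R br x (br x (br w v))"
      using hc2 wc2 zc2 by simp
    also have "\<dots> = - (3 *\<^sub>R br x (br x (br w v)))"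
      unfolding c2_def by (simp add: algebra_simps three)
    finally show "br x (br x (br w v)) = 0" by simp
  qed
  have Zc: "\<And>v. br h v = - v \<Longrightarrow>
      br z (br z (br x (br x v))) = v - 3 *\<^sub>R br w v + 2 *\<^sub>R br w (br w v)"
  proof -
    fix v assume hv: "br h v = - v"
    define c1 where "c1 = br x v"
    have hc1: "br h c1 = 0" unfolding c1_def using g1m[OF x1 hv] .
    have wc1: "br w c1 = br x (br w v)" unfolding c1_def using wcx .
    have zc2: "br z (br x c1) = c1 - 2 *\<^sub>R br x (br w v)"
      using deriv[of z x c1] zx hc1 wc1 A1[OF hv] unfolding c1_def[symmetric]
      by (simp add: scaleR_2 c1_def)
    have "br z (br z (br x c1)) = br z c1 - 2 *\<^sub>R br z (br x (br w v))" using zc2 by simp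
    also have "\<dots> = (v - br w v) - 2 *\<^sub>R (br w v - br w (br w v))"
      using A1[OF hv] A1[OF Nm[OF hv]] unfolding c1_def by simp
    also have "\<dots> = v - 3 *\<^sub>R br w v + 2 *\<^sub>R br w (br w v)"
      by (simp add: algebra_simps three)
    finally show "br z (br z (br x (br x v))) = v - 3 *\<^sub>R br w v + 2 *\<^sub>R br w (br w v)"
      unfolding c1_def .
  qed
  have Zb: "\<And>a. br h a = a \<Longrightarrow>
      br x (br x (br z (br z a))) = a + 3 *\<^sub>R br w a + 2 *\<^sub>R br w (br w a)"
  proof -
    fix a assume ha: "br h a = a"
    define d1 where "d1 = br z a"
    have hd1: "br h d1 = 0" unfolding d1_def using gm1[OF hz ha] .
    have xd1: "br x d1 = a + br w a" unfolding d1_def using B1[OF ha] .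
    have xd2: "br x (br z d1) = br w d1 + d1 + br z (br w a)"
      using deriv[of x z d1] xzw hd1 xd1 by (simp add: d1_def)
    have "br x (br x (br z d1)) = br x (br w d1) + br x d1 + br x (br z (br w a))"
      unfolding xd2 by simp
    also have "\<dots> = br w (a + br w a) + (a + br w a) + (br w a + br w (br w a))"
      using wcx[of d1] xd1 B1[OF N1[OF ha]] by simp
    also have "\<dots> = a + 3 *\<^sub>R br w a + 2 *\<^sub>R br w (br w a)"
      by (simp add: algebra_simps three' scaleR_2)
    finally show "br x (br x (br z (br z a))) = a + 3 *\<^sub>R br w a + 2 *\<^sub>R br w (br w a)"
      unfolding d1_def .
  qed
  have p1: "\<And>a. br h a = a \<Longrightarrow> br w a + 3 *\<^sub>R br w (br w a) + 2 *\<^sub>R br w (br w (br w a)) = 0"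
  proof -
    fix a assume ha: "br h a = a"
    have hza: "br h (br z (br z a)) = - br z (br z a)"
      using deriv[of h z "br z a"] hz gm1[OF hz ha] by simp
    have "br w (br x (br x (br z (br z a)))) = br x (br x (br w (br z (br z a))))"
      using wcx by simp
    also have "\<dots> = 0" using Za[OF hza] .
    finally show "br w a + 3 *\<^sub>R br w (br w a) + 2 *\<^sub>R br w (br w (br w a)) = 0"
      using Zb[OF ha] by simp
  qed
  have p2: "\<And>v. br h v = - v \<Longrightarrow> br w v - 3 *\<^sub>R br w (br w v) + 2 *\<^sub>R br w (br w (br w v)) = 0"
  proof -
    fix v assume hv: "br h v = - v"
    have "br z (br z (br x (br x (br w v)))) = 0" using Za[OF hv] by simp
    then show "br w v - 3 *\<^sub>R br w (br w v) + 2 *\<^sub>R br w (br w (br w v)) = 0"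
      using Zc[OF Nm[OF hv]] by simp
  qed
  have p2': "\<And>a. br h a = a \<Longrightarrow> br w a - 3 *\<^sub>R br w (br w a) + 2 *\<^sub>R br w (br w (br w a)) = 0"
  proof -
    fix a assume ha: "br h a = a"
    define q where "q = br w a - 3 *\<^sub>R br w (br w a) + 2 *\<^sub>R br w (br w (br w a))"
    have hq: "br h q = q" unfolding q_def using N1[OF ha] N1[OF N1[OF ha]] N1[OF N1[OF N1[OF ha]]] by simp
    have hffa: "br h (br f (br f a)) = - br f (br f a)"
      using deriv[of h f "br f a"] hf gm1[OF hf ha] by simp
    have "br f (br f q) = br w (br f (br f a)) - 3 *\<^sub>R br w (br w (br f (br f a)))
         + 2 *\<^sub>R br w (br w (br w (br f (br f a))))"
      unfolding q_def using wcf by simp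
    also have "\<dots> = 0" using p2[OF hffa] .
    finally have "br e (br e (br f (br f q))) = 0" by simp
    then show "br w a - 3 *\<^sub>R br w (br w a) + 2 *\<^sub>R br w (br w (br w a)) = 0"
      using E2F2[OF hq] unfolding q_def by simp
  qed
  have N2: "\<And>a. br h a = a \<Longrightarrow> br w (br w a) = 0"
  proof -
    fix a assume ha: "br h a = a"
    have six: "6 *\<^sub>R br w (br w a) = 3 *\<^sub>R br w (br w a) + 3 *\<^sub>R br w (br w a)"
      by (simp flip: scaleR_add_left)
    have "6 *\<^sub>R br w (br w a) = (br w a + 3 *\<^sub>R br w (br w a) + 2 *\<^sub>R br w (br w (br w a)))
       - (br w a - 3 *\<^sub>R br w (br w a) + 2 *\<^sub>R br w (br w (br w a)))"
      unfolding six by (simp add: algebra_simps)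
    with p1[OF ha] p2'[OF ha] have "6 *\<^sub>R br w (br w a) = 0" by simp
    then show "br w (br w a) = 0" by simp
  qed
  have Nz: "\<And>a. br h a = a \<Longrightarrow> br w a = 0"
  proof -
    fix a assume ha: "br h a = a"
    show "br w a = 0" using p1[OF ha] N2[OF ha] N2[OF N1[OF ha]] by simp
  qed
  have Nzm: "\<And>b. br h b = - b \<Longrightarrow> br w b = 0"
  proof -
    fix b assume hb: "br h b = - b"
    have heeb: "br h (br e (br e b)) = br e (br e b)"
      using g1m[OF he hb] deriv[of h e "br e b"] he by simp
    have "4 *\<^sub>R br w b = br w (br f (br f (br e (br e b))))" using F2E2[OF hb] by simp
    also have "\<dots> = br f (br f (br w (br e (br e b))))" using wcf by simp
    also have "\<dots> = 0" using Nz[OF heeb] by simp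
    finally show "br w b = 0" by simp
  qed
  have "w = 0" using cent[OF hw Nz Nzm] .
  then show ?thesis using hz xzw by auto
qed

end

theorem lemma5p5:
  fixes br :: "'a::euclidean_space \<Rightarrow> 'a \<Rightarrow> 'a" and \<theta> :: "'a \<Rightarrow> 'a" and h e x :: 'a
  assumes "hermitian_simple br \<theta>"
    and "cartan_involution br \<theta>"
    and "h \<in> ppart \<theta>"
    and "euler_element br h"
    and "e \<in> eigsp br h 1"
    and "br e (\<theta> e) = - 2 *\<^sub>R h"
    and "x \<in> eigsp br h 1"
  shows "jinvertible br \<theta> h e x \<longleftrightarrow> h \<in> br x ` eigsp br h (-1)"
proof -
  have sl: "simple_lie br" using assms(1) unfolding hermitian_simple_def by blast
  then have la: "lie_algebra br" unfolding simple_lie_def by blast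
  then interpret lieb br unfolding lie_algebra_def by unfold_locales auto
  have simp_ideal: "\<And>I. lie_ideal br I \<Longrightarrow> I = {0} \<or> I = UNIV"
    using sl unfolding simple_lie_def by blast
  have th_hom: "\<And>a b. \<theta> (br a b) = br (\<theta> a) (\<theta> b)"
    using assms(2) unfolding cartan_involution_def by blast
  have thh: "\<theta> h = - h" using assms(3) unfolding ppart_def by simp
  have hne: "h \<noteq> 0" using assms(4) unfolding euler_element_def by blast
  have dec: "\<And>v. \<exists>a b c. v = a + b + c \<and> br h a = - a \<and> br h b = 0 \<and> br h c = c"
    using assms(4) unfolding euler_element_def eigsp_def by simp
  have he: "br h e = e" using assms(5) unfolding eigsp_def by simp
  have hx: "br h x = x" using assms(7) unfolding eigsp_def by simp
  define f where "f = - \<theta> e"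
  have "br (\<theta> h) (\<theta> e) = \<theta> e" using th_hom[of h e] he by simp
  then have "- br h (\<theta> e) = \<theta> e" using thh by simp
  then have hte: "br h (\<theta> e) = - \<theta> e" by (metis minus_minus)
  have hf: "br h f = - f" unfolding f_def using hte by simp
  have ef: "br e f = 2 *\<^sub>R h" unfolding f_def using assms(6) by simp
  have cube: "\<And>v. br h (br h (br h v)) = br h v"
  proof -
    fix v
    obtain a b c where v: "v = a + b + c" "br h a = - a" "br h b = 0" "br h c = c"
      using dec by blast
    show "br h (br h (br h v)) = br h v" using v by simp
  qed
  have enz: "e \<noteq> 0"
  proof
    assume "e = 0"
    then have "- 2 *\<^sub>R h = 0" using assms(6) by simp
    with hne show False by simp
  qed
  have cent: "\<And>w. br h w = 0 \<Longrightarrow> (\<And>a. br h a = a \<Longrightarrow> br w a = 0)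
      \<Longrightarrow> (\<And>b. br h b = - b \<Longrightarrow> br w b = 0) \<Longrightarrow> w = 0"
  proof -
    fix w
    assume w0: "br h w = 0" and w1: "\<And>a. br h a = a \<Longrightarrow> br w a = 0"
      and wm: "\<And>b. br h b = - b \<Longrightarrow> br w b = 0"
    define I where "I = {w. br h w = 0 \<and> (\<forall>a. br h a = a \<longrightarrow> br w a = 0)
       \<and> (\<forall>b. br h b = - b \<longrightarrow> br w b = 0)}"
    have "subspace I" unfolding subspace_def I_def by simp
    moreover have "\<forall>u y. y \<in> I \<longrightarrow> br u y \<in> I"
    proof (intro allI impI)
      fix u y assume yI: "y \<in> I"
      then have y0: "br h y = 0" and y1: "\<And>a. br h a = a \<Longrightarrow> br y a = 0"
        and ym: "\<And>b. br h b = - b \<Longrightarrow> br y b = 0" unfolding I_def by auto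
      obtain a b c where u: "u = a + b + c" "br h a = - a" "br h b = 0" "br h c = c"
        using dec by blast
      have "br a y = 0" using antisym[of a y] ym[OF u(2)] by simp
      moreover have "br c y = 0" using antisym[of c y] y1[OF u(4)] by simp
      ultimately have uy: "br u y = br b y" using u(1) by simp
      have "br h (br b y) = 0" using deriv[of h b y] u(3) y0 by simp
      moreover have "\<And>a'. br h a' = a' \<Longrightarrow> br (br b y) a' = 0"
      proof -
        fix a' assume ha: "br h a' = a'"
        have "br h (br b a') = br b a'" using deriv[of h b a'] u(3) ha by simp
        then show "br (br b y) a' = 0" using deriv[of b y a'] y1[OF ha] y1 by simp
      qed
      moreover have "\<And>a'. br h a' = - a' \<Longrightarrow> br (br b y) a' = 0"
      proof -
        fix a' assume ha: "br h a' = - a'"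
        have "br h (br b a') = - br b a'" using deriv[of h b a'] u(3) ha by simp
        then show "br (br b y) a' = 0" using deriv[of b y a'] ym[OF ha] ym by simp
      qed
      ultimately show "br u y \<in> I" unfolding uy I_def by simp
    qed
    ultimately have "lie_ideal br I" unfolding lie_ideal_def by blast
    then have "I = {0} \<or> I = UNIV" by (rule simp_ideal)
    moreover have "I \<noteq> UNIV"
    proof
      assume "I = UNIV"
      then have "br h e = 0" unfolding I_def by auto
      with he enz show False by simp
    qed
    moreover have "w \<in> I" unfolding I_def using w0 w1 wm by blast
    ultimately show "w = 0" by auto
  qed
  interpret tkk br h e f
    by unfold_locales (use cube he hf ef cent in auto)
  have jp: "\<And>a b. jprod br \<theta> e a b = (1/2) *\<^sub>R br (br a f) b"
    unfolding jprod_def f_def by simp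
  show ?thesis
  proof
    assume "jinvertible br \<theta> h e x"
    then obtain y where hy: "br h y = y" and i1: "(1/2) *\<^sub>R br (br x f) y = e"
      and i2: "(1/2) *\<^sub>R br (br ((1/2) *\<^sub>R br (br x f) x) f) y = x"
      unfolding jinvertible_def eigsp_def jp by auto
    obtain z where "br h z = - z" "br x z = h" using forward[OF hx hy i1 i2] by blast
    then show "h \<in> br x ` eigsp br h (-1)" unfolding eigsp_def by force
  next
    assume "h \<in> br x ` eigsp br h (-1)"
    then obtain z where hz: "br h z = - z" and xz: "br x z = h" unfolding eigsp_def by auto
    note r = reverse[OF hx hz xz]
    show "jinvertible br \<theta> h e x" unfolding jinvertible_def eigsp_def jp
      using r by (intro bexI[of _ "- br e (br e z)"]) auto
  qed
qed

end
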